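(* Let $\Omega$ be the set of real symmetric $m\times m$ matrices, $\mathcal{P}$ the set of $m\times m$ orthogonal matrices, $s(A,B,P)=\|AP-PB\|$ for $A,B\in\Omega$, $P\in\mathcal{P}$, with $\|\cdot\|$ an orthogonally invariant matrix norm, and $d(A,B)=\min_{P\in\mathcal{P}}s(A,B,P)$. Let $\Lambda_{A_i}\in\mathbb{R}^m$ be the vector of eigenvalues of $A_i$, ordered from largest to smallest. Then $$d_F(A_{1:n})=\min_{\Lambda_C\in\mathbb{R}^m}\sum_{i=1}^n\|\Lambda_{A_i}-\Lambda_C\|,$$ where $d_F(A_{1:n})=\min_{B\in\Omega}\sum_{i=1}^n d(A_i,B)$ is the Fermat distance function induced by $d$.
   Context: The vector norm on the right-hand side is the one corresponding to the matrix norm: the Euclidean norm when the matrix norm is the Frobenius norm, and the $\infty$-norm when the matrix norm is the operator 2-norm. *)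

theory Defs
  imports "HOL-Analysis.Analysis" "HOL-Computational_Algebra.Polynomial"
begin

text \<open>The two admissible (orthogonally invariant) matrix norms of the paper and
  their corresponding vector norms.\<close>
datatype norm_kind = Frobenius | Operator2

definition symmetric_mat :: "real^'m^'m \<Rightarrow> bool" where
  "symmetric_mat A \<longleftrightarrow> transpose A = A"

definition mat_norm :: "norm_kind \<Rightarrow> real^'m^'m \<Rightarrow> real" where
  "mat_norm k M = (case k of
      Frobenius \<Rightarrow> sqrt (\<Sum>i\<in>UNIV. \<Sum>j\<in>UNIV. (M $ i $ j)^2)
    | Operator2 \<Rightarrow> onorm (\<lambda>x. M *v x))"

definition vec_norm :: "norm_kind \<Rightarrow> real list \<Rightarrow> real" where
  "vec_norm k x = (case k of
      Frobenius \<Rightarrow> sqrt (\<Sum>i<length x. (x ! i)^2)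
    | Operator2 \<Rightarrow> Max {\<bar>x ! i\<bar> | i. i < length x})"

definition s_fun :: "norm_kind \<Rightarrow> real^'m^'m \<Rightarrow> real^'m^'m \<Rightarrow> real^'m^'m \<Rightarrow> real" where
  "s_fun k A B P = mat_norm k (A ** P - P ** B)"

definition d_fun :: "norm_kind \<Rightarrow> real^'m^'m \<Rightarrow> real^'m^'m \<Rightarrow> real" where
  "d_fun k A B = (INF P\<in>{P. orthogonal_matrix P}. s_fun k A B P)"

definition fermat_dist :: "norm_kind \<Rightarrow> nat \<Rightarrow> (nat \<Rightarrow> real^'m^'m) \<Rightarrow> real" where
  "fermat_dist k n A = (INF B\<in>{B. symmetric_mat B}. \<Sum>i<n. d_fun k (A i) B)"

definition char_poly_mat :: "real^'m^'m \<Rightarrow> real poly" where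
  "char_poly_mat A = det (\<chi> i j. (if i = j then [:0, 1:] else 0) - [:A $ i $ j:])"

definition eig_vec :: "real^'m^'m \<Rightarrow> real list" where
  "eig_vec A = rev (sorted_list_of_multiset (proots (char_poly_mat A)))"

definition vdiff :: "real list \<Rightarrow> real list \<Rightarrow> real list" where
  "vdiff x y = map2 (-) x y"

end

theory Submission
  imports Defs
begin


lemma sym_inner:
  fixes A :: "real^'n^'n"
  assumes "symmetric_mat A"
  shows "(A *v x) \<bullet> y = x \<bullet> (A *v y)"
proof -
  have "x \<bullet> (A *v y) = (x v* A) \<bullet> y" by (simp add: dot_lmul_matrix)
  also have "x v* A = transpose A *v x" by (simp add: transpose_matrix_vector)
  also have "transpose A = A" using assms by (simp add: symmetric_mat_def)
  finally show ?thesis by simp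
qed

definition onb :: "(nat \<Rightarrow> real^'n) \<Rightarrow> bool" where
  "onb v \<longleftrightarrow> (\<forall>i<CARD('n). \<forall>j<CARD('n). v i \<bullet> v j = (if i = j then 1 else 0))"

lemma inner_sum_onb:
  fixes v :: "nat \<Rightarrow> 'a::real_inner" and k :: nat
  assumes "\<forall>i<k. \<forall>j<k. v i \<bullet> v j = (if i = j then 1 else 0)" "j < k"
  shows "(\<Sum>i<k. c i *\<^sub>R v i) \<bullet> v j = c j"
proof -
  have "(\<Sum>i<k. c i *\<^sub>R v i) \<bullet> v j = (\<Sum>i<k. c i * (v i \<bullet> v j))"
    by (simp add: inner_sum_left)
  also have "\<dots> = (\<Sum>i<k. if i = j then c i else 0)"
    by (rule sum.cong) (use assms in auto)
  also have "\<dots> = c j" using assms(2) by (subst sum.delta) simp_all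
  finally show ?thesis .
qed

lemma onb_expand:
  fixes v :: "nat \<Rightarrow> real^'n"
  assumes "onb v"
  shows "x = (\<Sum>i<CARD('n). (x \<bullet> v i) *\<^sub>R v i)"
proof (rule ccontr)
  let ?m = "CARD('n)"
  define y where "y = x - (\<Sum>i<?m. (x \<bullet> v i) *\<^sub>R v i)"
  assume "x \<noteq> (\<Sum>i<CARD('n). (x \<bullet> v i) *\<^sub>R v i)"
  then have y0: "y \<noteq> 0" by (simp add: y_def)
  have ortho: "\<forall>i<?m. \<forall>j<?m. v i \<bullet> v j = (if i = j then 1 else 0)"
    using assms by (simp add: onb_def)
  have yv: "y \<bullet> v j = 0" if "j < ?m" for j
    using inner_sum_onb[OF ortho that, of "\<lambda>i. x \<bullet> v i"] by (simp add: y_def inner_diff_left)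
  define z where "z = y /\<^sub>R norm y"
  have zz: "z \<bullet> z = 1" using y0 by (simp add: z_def dot_square_norm)
  have zv: "z \<bullet> v j = 0" if "j < ?m" for j using yv[OF that] by (simp add: z_def)
  define S where "S = insert z (v ` {..<?m})"
  have vv: "v i \<bullet> v i = 1" if "i < ?m" for i using ortho that by auto
  have inj: "inj_on v {..<?m}"
  proof (rule inj_onI)
    fix i j assume "i \<in> {..<?m}" "j \<in> {..<?m}" "v i = v j"
    then show "i = j" using ortho vv by (metis lessThan_iff zero_neq_one)
  qed
  have znot: "z \<notin> v ` {..<?m}" using zv zz by auto
  have "pairwise orthogonal S"
    unfolding S_def pairwise_def orthogonal_def
    using ortho zv by (auto simp: inner_commute)
  moreover have "0 \<notin> S" unfolding S_def using zz vv by (auto, metis inner_zero_left zero_neq_one)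
  ultimately have "independent S" by (rule pairwise_orthogonal_independent)
  then have "card S \<le> DIM(real^'n)" using independent_bound by blast
  moreover have "card S = Suc ?m"
    unfolding S_def using znot inj by (simp add: card_image)
  ultimately show False by simp
qed

lemma onb_coeff_inner:
  fixes v :: "nat \<Rightarrow> real^'n"
  assumes "onb v"
  shows "x \<bullet> y = (\<Sum>i<CARD('n). (x \<bullet> v i) * (y \<bullet> v i))"
proof -
  have "x \<bullet> y = (\<Sum>i<CARD('n). (x \<bullet> v i) *\<^sub>R v i) \<bullet> y"
    using onb_expand[OF assms, of x] by simp
  also have "\<dots> = (\<Sum>i<CARD('n). (x \<bullet> v i) * (y \<bullet> v i))"
    unfolding inner_sum_left by (simp add: inner_commute)
  finally show ?thesis .
qed

lemma rayleigh_onb: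
  fixes v :: "nat \<Rightarrow> real^'n" and A :: "real^'n^'n"
  assumes "onb v" "symmetric_mat A" "\<forall>i<CARD('n). A *v v i = lam i *\<^sub>R v i"
  shows "x \<bullet> (A *v x) = (\<Sum>i<CARD('n). lam i * (x \<bullet> v i)^2)"
proof -
  have "x \<bullet> (A *v x) = (\<Sum>i<CARD('n). (x \<bullet> v i) * ((A *v x) \<bullet> v i))"
    by (rule onb_coeff_inner[OF assms(1)])
  also have "\<dots> = (\<Sum>i<CARD('n). lam i * (x \<bullet> v i)^2)"
  proof (rule sum.cong)
    fix i assume "i \<in> {..<CARD('n)}"
    then have "(A *v x) \<bullet> v i = lam i * (x \<bullet> v i)"
      using assms(3) sym_inner[OF assms(2), of x "v i"] by simp
    then show "(x \<bullet> v i) * ((A *v x) \<bullet> v i) = lam i * (x \<bullet> v i)^2"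
      by (simp add: power2_eq_square)
  qed simp
  finally show ?thesis .
qed

lemma norm2_onb:
  fixes v :: "nat \<Rightarrow> real^'n"
  assumes "onb v"
  shows "x \<bullet> x = (\<Sum>i<CARD('n). (x \<bullet> v i)^2)"
  using onb_coeff_inner[OF assms, of x x] by (simp add: power2_eq_square)



lemma quad_nonneg_zero:
  fixes a b :: real
  assumes "\<And>t. 0 \<le> 2 * t * a + t^2 * b" "0 \<le> b"
  shows "a = 0"
proof (rule ccontr)
  assume "a \<noteq> 0"
  define t where "t = - a / (b + 1)"
  have b1: "b + 1 > 0" using assms(2) by simp
  have "0 \<le> 2 * t * a + t^2 * b" by (rule assms(1))
  then have "0 \<le> (2 * t * a + t^2 * b) * (b+1)^2" using b1 by simp
  have tb: "t * (b + 1) = - a" using b1 by (simp add: t_def)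
  have "(2 * t * a + t^2 * b) * (b+1)^2 = 2 * a * (t * (b+1)) * (b+1) + b * (t * (b+1))^2"
    by (simp add: algebra_simps power2_eq_square)
  also have "\<dots> = -(a^2 * (b + 2))" unfolding tb by (simp add: algebra_simps power2_eq_square)
  finally have eq: "(2 * t * a + t^2 * b) * (b+1)^2 = -(a^2 * (b + 2))" .
  note \<open>0 \<le> (2 * t * a + t^2 * b) * (b+1)^2\<close>
  also note eq
  finally have "a^2 * (b+2) \<le> 0" by simp
  moreover have "a^2 * (b+2) > 0" using \<open>a \<noteq> 0\<close> assms(2) by simp
  ultimately show False by simp
qed

lemma spectral_step:
  fixes A :: "real^'n^'n" and v :: "nat \<Rightarrow> real^'n"
  assumes sym: "symmetric_mat A" and k: "k < CARD('n)"
    and orth: "\<forall>i<k. \<forall>j<k. v i \<bullet> v j = (if i = j then 1 else 0)"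
    and eig: "\<forall>i<k. A *v v i = lam i *\<^sub>R v i"
  shows "\<exists>u \<mu>. u \<bullet> u = 1 \<and> (\<forall>j<k. u \<bullet> v j = 0) \<and> A *v u = \<mu> *\<^sub>R u \<and>
           (\<forall>x. (\<forall>j<k. x \<bullet> v j = 0) \<longrightarrow> x \<bullet> (A *v x) \<le> \<mu> * (x \<bullet> x))"
proof -
  define S where "S = (\<Inter>j\<in>{..<k}. {x::real^'n. v j \<bullet> x = 0})"
  have S_iff: "x \<in> S \<longleftrightarrow> (\<forall>j<k. x \<bullet> v j = 0)" for x
    by (auto simp: S_def inner_commute)
  have closedS: "closed S" unfolding S_def by (intro closed_INT ballI closed_hyperplane)
  have "span (v ` {..<k}) \<noteq> UNIV"
  proof
    assume "span (v ` {..<k}) = UNIV"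
    then have "dim (UNIV :: (real^'n) set) \<le> card (v ` {..<k})"
      by (intro dim_le_card) auto
    also have "\<dots> \<le> k" using card_image_le[of "{..<k}" v] by simp
    finally show False using k by simp
  qed
  then obtain a where a0: "a \<noteq> 0" and aperp: "\<forall>x\<in>span (v ` {..<k}). a \<bullet> x = 0"
    using span_not_UNIV_orthogonal by blast
  have aS: "a \<in> S" unfolding S_iff using aperp by (auto intro: span_base)
  define K where "K = S \<inter> sphere 0 1"
  have compK: "compact K" unfolding K_def by (intro closed_Int_compact closedS compact_sphere)
  have "a /\<^sub>R norm a \<in> K" using aS a0 by (auto simp: K_def S_iff)
  then have Kne: "K \<noteq> {}" by auto
  define f where "f x = x \<bullet> (A *v x)" for x :: "real^'n"
  have contf: "continuous_on K f"
    unfolding f_def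
    by (intro continuous_on_inner continuous_on_id
        linear_continuous_on[OF matrix_vector_mul_bounded_linear])
  obtain u where uK: "u \<in> K" and umax: "\<forall>y\<in>K. f y \<le> f u"
    using continuous_attains_sup[OF compK Kne contf] by blast
  define \<mu> where "\<mu> = f u"
  have uS: "u \<in> S" and nu: "norm u = 1" using uK by (auto simp: K_def)
  have uu: "u \<bullet> u = 1" using nu by (simp add: dot_square_norm)
  have bound: "x \<bullet> (A *v x) \<le> \<mu> * (x \<bullet> x)" if xS: "x \<in> S" for x
  proof (cases "x = 0")
    case True then show ?thesis by simp
  next
    case False
    define y where "y = x /\<^sub>R norm x"
    have "y \<in> K" using xS False by (auto simp: K_def S_iff y_def)
    then have "f y \<le> \<mu>" using umax by (simp add: \<mu>_def)
    moreover have "f y = f x / (norm x)^2"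
      using False by (simp add: f_def y_def matrix_vector_mult_scaleR power2_eq_square field_simps)
    ultimately have "f x / (norm x)^2 \<le> \<mu>" by simp
    then have "f x \<le> \<mu> * (norm x)^2" using False by (simp add: divide_le_eq)
    then show ?thesis by (simp add: f_def dot_square_norm)
  qed
  define r where "r = \<mu> *\<^sub>R u - A *v u"
  have rS: "r \<in> S" unfolding S_iff
  proof (intro allI impI)
    fix j assume j: "j < k"
    have "(A *v u) \<bullet> v j = u \<bullet> (A *v v j)" by (rule sym_inner[OF sym])
    also have "\<dots> = lam j * (u \<bullet> v j)" using eig j by simp
    also have "u \<bullet> v j = 0" using uS j by (simp add: S_iff)
    finally show "r \<bullet> v j = 0" using uS j by (simp add: r_def inner_diff_left S_iff)
  qed
  have wr: "w \<bullet> r = 0" if wS: "w \<in> S" for w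
  proof -
    define a where "a = w \<bullet> r"
    define b where "b = \<mu> * (w \<bullet> w) - w \<bullet> (A *v w)"
    have b0: "0 \<le> b" using bound[OF wS] by (simp add: b_def)
    have uAw: "u \<bullet> (A *v w) = w \<bullet> (A *v u)"
      using sym_inner[OF sym, of w u] by (simp add: inner_commute)
    have uAu: "u \<bullet> (A *v u) = \<mu>" by (simp add: \<mu>_def f_def)
    have "0 \<le> 2 * t * a + t^2 * b" for t
    proof -
      have xS: "u + t *\<^sub>R w \<in> S" using uS wS by (simp add: S_iff inner_add_left)
      have "(u + t *\<^sub>R w) \<bullet> (A *v (u + t *\<^sub>R w)) =
            u \<bullet> (A *v u) + 2 * t * (w \<bullet> (A *v u)) + t^2 * (w \<bullet> (A *v w))"
        using uAw by (simp add: matrix_vector_right_distrib matrix_vector_mult_scaleR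
            inner_add_left inner_add_right power2_eq_square algebra_simps)
      moreover have "(u + t *\<^sub>R w) \<bullet> (u + t *\<^sub>R w) =
            u \<bullet> u + 2 * t * (u \<bullet> w) + t^2 * (w \<bullet> w)"
        by (simp add: inner_add_left inner_add_right power2_eq_square algebra_simps inner_commute)
      ultimately have "u \<bullet> (A *v u) + 2 * t * (w \<bullet> (A *v u)) + t^2 * (w \<bullet> (A *v w))
          \<le> \<mu> * (u \<bullet> u + 2 * t * (u \<bullet> w) + t^2 * (w \<bullet> w))"
        using bound[OF xS] by simp
      then have "0 \<le> 2 * t * (\<mu> * (u \<bullet> w) - w \<bullet> (A *v u)) + t^2 * b"
        using uAu uu by (simp add: b_def algebra_simps)
      moreover have "a = \<mu> * (u \<bullet> w) - w \<bullet> (A *v u)"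
        by (simp add: a_def r_def inner_diff_right inner_commute)
      ultimately show ?thesis by simp
    qed
    from quad_nonneg_zero[OF this b0] show ?thesis by (simp add: a_def)
  qed
  have "r \<bullet> r = 0" using wr[OF rS] .
  then have "r = 0" by simp
  then have "A *v u = \<mu> *\<^sub>R u" by (simp add: r_def)
  then show ?thesis using uu uS bound by (auto simp: S_iff)
qed



lemma spectral_ind:
  fixes A :: "real^'n^'n"
  assumes sym: "symmetric_mat A"
  shows "k \<le> CARD('n) \<Longrightarrow> \<exists>v lam. (\<forall>i<k. \<forall>j<k. v i \<bullet> v j = (if i = j then 1 else 0)) \<and>
    (\<forall>i<k. A *v v i = lam i *\<^sub>R v i) \<and>
    (\<forall>i<k. \<forall>x. (\<forall>j<i. x \<bullet> v j = 0) \<longrightarrow> x \<bullet> (A *v x) \<le> lam i * (x \<bullet> x))"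
proof (induction k)
  case 0 then show ?case by simp
next
  case (Suc k)
  then obtain v lam where
    orth: "\<forall>i<k. \<forall>j<k. v i \<bullet> v j = (if i = j then 1 else 0)" and
    eig: "\<forall>i<k. A *v v i = lam i *\<^sub>R v i" and
    mx: "\<forall>i<k. \<forall>x. (\<forall>j<i. x \<bullet> v j = 0) \<longrightarrow> x \<bullet> (A *v x) \<le> lam i * (x \<bullet> x)"
    by auto
  have k: "k < CARD('n)" using Suc.prems by simp
  obtain u \<mu> where uu: "u \<bullet> u = 1" and uv: "\<forall>j<k. u \<bullet> v j = 0" and ue: "A *v u = \<mu> *\<^sub>R u"
    and um: "\<forall>x. (\<forall>j<k. x \<bullet> v j = 0) \<longrightarrow> x \<bullet> (A *v x) \<le> \<mu> * (x \<bullet> x)"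
    using spectral_step[OF sym k orth eig] by blast
  define v' where "v' = v(k := u)"
  define lam' where "lam' = lam(k := \<mu>)"
  have "\<forall>i<Suc k. \<forall>j<Suc k. v' i \<bullet> v' j = (if i = j then 1 else 0)"
    using orth uu uv by (auto simp: v'_def less_Suc_eq inner_commute)
  moreover have "\<forall>i<Suc k. A *v v' i = lam' i *\<^sub>R v' i"
    using eig ue by (auto simp: v'_def lam'_def less_Suc_eq)
  moreover have "\<forall>i<Suc k. \<forall>x. (\<forall>j<i. x \<bullet> v' j = 0) \<longrightarrow> x \<bullet> (A *v x) \<le> lam' i * (x \<bullet> x)"
  proof (intro allI impI)
    fix i x assume i: "i < Suc k" and h: "\<forall>j<i. x \<bullet> v' j = 0"
    show "x \<bullet> (A *v x) \<le> lam' i * (x \<bullet> x)"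
    proof (cases "i = k")
      case True
      then have "\<forall>j<k. x \<bullet> v j = 0" using h by (auto simp: v'_def)
      then show ?thesis using um True by (simp add: lam'_def)
    next
      case False
      then have "i < k" using i by simp
      moreover have "\<forall>j<i. x \<bullet> v j = 0" using h \<open>i < k\<close> by (auto simp: v'_def)
      ultimately show ?thesis using mx by (simp add: lam'_def)
    qed
  qed
  ultimately show ?case by blast
qed

lemma spectral:
  fixes A :: "real^'n^'n"
  assumes sym: "symmetric_mat A"
  shows "\<exists>v lam. onb v \<and> (\<forall>i<CARD('n). A *v v i = lam i *\<^sub>R v i) \<and>
           (\<forall>i j. i \<le> j \<longrightarrow> j < CARD('n) \<longrightarrow> lam j \<le> lam i)"
proof -
  obtain v lam where
    orth: "\<forall>i<CARD('n). \<forall>j<CARD('n). v i \<bullet> v j = (if i = j then 1 else 0)" and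
    eig: "\<forall>i<CARD('n). A *v v i = lam i *\<^sub>R v i" and
    mx: "\<forall>i<CARD('n). \<forall>x. (\<forall>j<i. x \<bullet> v j = 0) \<longrightarrow> x \<bullet> (A *v x) \<le> lam i * (x \<bullet> x)"
    using spectral_ind[OF sym, of "CARD('n)"] by auto
  have "lam j \<le> lam i" if "i \<le> j" "j < CARD('n)" for i j
  proof -
    have "\<forall>l<i. v j \<bullet> v l = 0" using orth that by auto
    then have "v j \<bullet> (A *v v j) \<le> lam i * (v j \<bullet> v j)" using mx that by simp
    moreover have "v j \<bullet> v j = 1" using orth that by simp
    moreover have "v j \<bullet> (A *v v j) = lam j" using eig that \<open>v j \<bullet> v j = 1\<close> by simp
    ultimately show ?thesis by simp
  qed
  then show ?thesis using orth eig unfolding onb_def by blast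
qed



definition evmat :: "('n \<Rightarrow> nat) \<Rightarrow> (nat \<Rightarrow> real^'n) \<Rightarrow> real^'n^'n" where
  "evmat h v = (\<chi> r c. v (h c) $ r)"

definition dmat :: "('n \<Rightarrow> nat) \<Rightarrow> (nat \<Rightarrow> real) \<Rightarrow> real^'n^'n" where
  "dmat h d = (\<chi> i j. if i = j then d (h i) else 0)"

lemma evmat_orth:
  fixes v :: "nat \<Rightarrow> real^'n"
  assumes "onb v" "bij_betw h (UNIV::'n set) {..<CARD('n)}"
  shows "orthogonal_matrix (evmat h v)"
proof -
  have hlt: "h c < CARD('n)" for c using assms(2) by (auto dest: bij_betwE)
  have inj: "h a = h b \<longleftrightarrow> a = b" for a b using assms(2) by (auto dest: bij_betw_imp_inj_on inj_onD)
  have "(transpose (evmat h v) ** evmat h v) $ a $ b = mat 1 $ a $ b" for a b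
  proof -
    have "(transpose (evmat h v) ** evmat h v) $ a $ b = v (h a) \<bullet> v (h b)"
      by (simp add: matrix_matrix_mult_def transpose_def evmat_def inner_vec_def)
    also have "\<dots> = mat 1 $ a $ b" using assms(1) hlt inj by (simp add: onb_def mat_def)
    finally show ?thesis .
  qed
  then show ?thesis unfolding orthogonal_matrix by (simp add: vec_eq_iff)
qed

lemma evmat_eig:
  fixes v :: "nat \<Rightarrow> real^'n" and A :: "real^'n^'n"
  assumes "\<forall>i<CARD('n). A *v v i = lam i *\<^sub>R v i" "bij_betw h (UNIV::'n set) {..<CARD('n)}"
  shows "A ** evmat h v = evmat h v ** dmat h lam"
proof -
  have hlt: "h c < CARD('n)" for c using assms(2) by (auto dest: bij_betwE)
  have "(A ** evmat h v) $ r $ c = (evmat h v ** dmat h lam) $ r $ c" for r c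
  proof -
    have "(A ** evmat h v) $ r $ c = (A *v v (h c)) $ r"
      by (simp add: matrix_matrix_mult_def matrix_vector_mult_def evmat_def)
    also have "\<dots> = lam (h c) * v (h c) $ r" using assms(1) hlt by simp
    also have "\<dots> = (evmat h v ** dmat h lam) $ r $ c"
      by (simp add: matrix_matrix_mult_def evmat_def dmat_def if_distrib if_distribR sum.delta' cong: if_cong)
    finally show ?thesis .
  qed
  then show ?thesis by (simp add: vec_eq_iff)
qed

lemma matrix_sub_ldistrib': "(A::'a::ring_1^'n^'m) ** (B - C) = A ** B - A ** C"
  by (vector matrix_matrix_mult_def sum_subtractf[symmetric] algebra_simps)

lemma matrix_sub_rdistrib': "((B::'a::ring_1^'n^'m) - C) ** A = B ** A - C ** A"
  by (vector matrix_matrix_mult_def sum_subtractf[symmetric] algebra_simps)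

definition Lf :: "real^'n^'m \<Rightarrow> real poly^'n^'m" where
  "Lf M = (\<chi> i j. [:M $ i $ j:])"

lemma Lf_mul: "Lf (M ** N) = Lf M ** Lf N"
  by (simp add: Lf_def matrix_matrix_mult_def vec_eq_iff sum_to_poly mult_to_poly mult.commute)

lemma Lf_one: "Lf (mat 1 :: real^'n^'n) = mat 1"
  by (simp add: Lf_def mat_def vec_eq_iff)

lemma mat_comm: "(M::'a::comm_ring_1^'n^'n) ** mat c = mat c ** M"
  unfolding matrix_matrix_mult_def mat_def
  by (simp add: vec_eq_iff if_distrib if_distribR sum.delta sum.delta' mult.commute cong: if_cong)

lemma char_poly_conj:
  fixes Q D :: "real^'n^'n"
  assumes "orthogonal_matrix Q"
  shows "char_poly_mat (Q ** D ** transpose Q) = char_poly_mat D"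
proof -
  let ?X = "mat [:0, 1:] :: real poly^'n^'n"
  have cp: "char_poly_mat M = det (?X - Lf M)" for M :: "real^'n^'n"
    unfolding char_poly_mat_def by (rule arg_cong[where f=det]) (simp add: vec_eq_iff mat_def Lf_def)
  have QQ: "Lf Q ** Lf (transpose Q) = mat 1"
    using assms by (simp add: Lf_mul[symmetric] orthogonal_matrix_def Lf_one)
  have QQ': "Lf (transpose Q) ** Lf Q = mat 1"
    using assms by (simp add: Lf_mul[symmetric] orthogonal_matrix_def Lf_one)
  have "Lf Q ** ?X ** Lf (transpose Q) = ?X"
    by (metis QQ mat_comm matrix_mul_assoc matrix_mul_rid)
  then have eq: "?X - Lf (Q ** D ** transpose Q) = Lf Q ** (?X - Lf D) ** Lf (transpose Q)"
    by (simp add: Lf_mul matrix_sub_ldistrib' matrix_sub_rdistrib' matrix_mul_assoc)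
  have "det (Lf Q) * det (Lf (transpose Q)) = 1"
    using QQ by (metis det_I det_mul)
  then show ?thesis unfolding cp eq det_mul
    by (simp add: algebra_simps)
qed

lemma mset_map_upt: "mset (map f [0..<m]) = (\<Sum>k<m. {#f k#})"
  by (induction m) (auto simp: add.commute)

lemma eig_spec:
  fixes A :: "real^'n^'n"
  assumes sym: "symmetric_mat A"
  shows "\<exists>v lam. onb v \<and> (\<forall>i<CARD('n). A *v v i = lam i *\<^sub>R v i) \<and>
           (\<forall>i j. i \<le> j \<longrightarrow> j < CARD('n) \<longrightarrow> lam j \<le> lam i) \<and>
           eig_vec A = map lam [0..<CARD('n)]"
proof -
  obtain v lam where onb: "onb v" and eig: "\<forall>i<CARD('n). A *v v i = lam i *\<^sub>R v i"
    and dec: "\<forall>i j. i \<le> j \<longrightarrow> j < CARD('n) \<longrightarrow> lam j \<le> lam i"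
    using spectral[OF sym] by blast
  define h where "h = to_nat_on (UNIV :: 'n set)"
  have bij: "bij_betw h (UNIV::'n set) {..<CARD('n)}"
    unfolding h_def by (rule to_nat_on_finite) simp
  define Q where "Q = evmat h v"
  have Qo: "orthogonal_matrix Q" unfolding Q_def by (rule evmat_orth[OF onb bij])
  have AQ: "A ** Q = Q ** dmat h lam" unfolding Q_def by (rule evmat_eig[OF eig bij])
  have "A = A ** (Q ** transpose Q)" using Qo by (simp add: orthogonal_matrix_def)
  also have "\<dots> = Q ** dmat h lam ** transpose Q" by (simp add: matrix_mul_assoc AQ)
  finally have Aeq: "A = Q ** dmat h lam ** transpose Q" .
  have "char_poly_mat (dmat h lam) = (\<Prod>c\<in>UNIV. [:- lam (h c), 1:])"
    unfolding char_poly_mat_def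
    by (subst det_diagonal) (auto simp: dmat_def)
  also have "\<dots> = (\<Prod>k\<in>{..<CARD('n)}. [:- lam k, 1:])"
    by (rule prod.reindex_bij_betw[OF bij])
  finally have cpD: "char_poly_mat (dmat h lam) = (\<Prod>k<CARD('n). [:- lam k, 1:])" .
  have "proots (char_poly_mat A) = (\<Sum>k<CARD('n). proots [:- lam k, 1:])"
    unfolding Aeq char_poly_conj[OF Qo] cpD by (rule proots_prod) simp
  also have "\<dots> = (\<Sum>k<CARD('n). {#lam k#})" by simp
  also have "\<dots> = mset (map lam [0..<CARD('n)])" by (rule mset_map_upt[symmetric])
  finally have pr: "proots (char_poly_mat A) = mset (map lam [0..<CARD('n)])" .
  have srt: "sorted (rev (map lam [0..<CARD('n)]))"
    unfolding sorted_rev_iff_nth_mono using dec by simp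
  have "sort (map lam [0..<CARD('n)]) = rev (map lam [0..<CARD('n)])"
    by (rule properties_for_sort) (simp_all add: srt)
  then have "eig_vec A = map lam [0..<CARD('n)]"
    unfolding eig_vec_def pr sorted_list_of_multiset_mset by simp
  then show ?thesis using onb eig dec by blast
qed



lemma ds_ineq:
  fixes a b :: "nat \<Rightarrow> real" and S :: "nat \<Rightarrow> nat \<Rightarrow> real"
  assumes adec: "\<forall>i j. i \<le> j \<longrightarrow> j < n \<longrightarrow> a j \<le> a i"
    and bdec: "\<forall>i j. i \<le> j \<longrightarrow> j < n \<longrightarrow> b j \<le> b i"
    and S0: "\<forall>i<n. \<forall>j<n. 0 \<le> S i j"
    and row: "\<forall>i<n. (\<Sum>j<n. S i j) = 1"
    and col: "\<forall>j<n. (\<Sum>i<n. S i j) = 1"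
  shows "(\<Sum>i<n. \<Sum>j<n. a i * b j * S i j) \<le> (\<Sum>i<n. a i * b i)"
proof -
  define d where "d i = (\<Sum>j<n. b j * S i j) - b i" for i
  define D where "D k = (\<Sum>i<k. d i)" for k
  have diff: "(\<Sum>i<n. \<Sum>j<n. a i * b j * S i j) - (\<Sum>i<n. a i * b i) = (\<Sum>i<n. a i * d i)"
    by (simp add: d_def right_diff_distrib sum_subtractf sum_distrib_left mult.assoc)
  have Dle: "D k \<le> 0" if k: "k \<le> n" for k
  proof -
    define c where "c j = (\<Sum>i<k. S i j)" for j
    have Dk: "D k = (\<Sum>j<n. b j * c j) - (\<Sum>j<k. b j)"
    proof -
      have "D k = (\<Sum>i<k. \<Sum>j<n. b j * S i j) - (\<Sum>i<k. b i)"
        unfolding D_def d_def by (simp only: sum_subtractf)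
      also have "(\<Sum>i<k. \<Sum>j<n. b j * S i j) = (\<Sum>j<n. \<Sum>i<k. b j * S i j)"
        by (rule sum.swap)
      also have "\<dots> = (\<Sum>j<n. b j * c j)" unfolding c_def by (simp only: sum_distrib_left)
      finally show ?thesis .
    qed
    have c0: "0 \<le> c j" if "j < n" for j
      unfolding c_def using S0 k that by (intro sum_nonneg) auto
    have c1: "c j \<le> 1" if "j < n" for j
    proof -
      have "c j \<le> (\<Sum>i<n. S i j)"
        unfolding c_def using S0 k that by (intro sum_mono2) auto
      then show ?thesis using col that by simp
    qed
    have csum: "(\<Sum>j<n. c j) = real k"
    proof -
      have "(\<Sum>j<n. c j) = (\<Sum>i<k. \<Sum>j<n. S i j)" unfolding c_def by (rule sum.swap)
      also have "\<dots> = (\<Sum>i<k. 1)" using row k by (intro sum.cong) auto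
      finally show ?thesis by simp
    qed
    show ?thesis
    proof (cases "k = n")
      case True
      then have "c j = 1" if "j < n" for j using col that by (simp add: c_def)
      then have "(\<Sum>j<n. b j * c j) = (\<Sum>j<n. b j)" by (intro sum.cong) auto
      then show ?thesis using Dk True by simp
    next
      case False
      then have kn: "k < n" using k by simp
      define ind where "ind j = (if j < k then 1 else 0::real)" for j
      have indsum: "(\<Sum>j<n. ind j) = real k"
      proof -
        have "(\<Sum>j<n. ind j) = (\<Sum>j\<in>{..<n} \<inter> {j. j < k}. 1)"
          unfolding ind_def by (simp only: sum.inter_restrict[OF finite_lessThan] mem_Collect_eq)
        also have "{..<n} \<inter> {j. j < k} = {..<k}" using kn by auto
        finally show ?thesis by simp
      qed
      have bk: "(\<Sum>j<k. b j) = (\<Sum>j<n. b j * ind j)"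
      proof -
        have "(\<Sum>j<n. b j * ind j) = (\<Sum>j<n. if j \<in> {j. j < k} then b j else 0)"
          unfolding ind_def by (intro sum.cong) auto
        also have "\<dots> = (\<Sum>j\<in>{..<n} \<inter> {j. j < k}. b j)"
          by (simp only: sum.inter_restrict[OF finite_lessThan])
        also have "{..<n} \<inter> {j. j < k} = {..<k}" using kn by auto
        finally show ?thesis by simp
      qed
      have "D k = (\<Sum>j<n. b j * (c j - ind j))"
        unfolding Dk bk by (simp add: sum_subtractf right_diff_distrib)
      also have "\<dots> \<le> (\<Sum>j<n. b k * (c j - ind j))"
      proof (rule sum_mono)
        fix j assume j: "j \<in> {..<n}"
        show "b j * (c j - ind j) \<le> b k * (c j - ind j)"
        proof (cases "j < k")
          case True
          then have "b k \<le> b j" using bdec kn by simp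
          moreover have "c j - ind j \<le> 0" using c1 j True by (simp add: ind_def)
          ultimately show ?thesis by (simp add: mult_right_mono_neg)
        next
          case False
          then have "b j \<le> b k" using bdec j by simp
          moreover have "c j - ind j \<ge> 0" using c0 j False by (simp add: ind_def)
          ultimately show ?thesis by (simp add: mult_right_mono)
        qed
      qed
      also have "\<dots> = b k * ((\<Sum>j<n. c j) - (\<Sum>j<n. ind j))"
        by (simp add: sum_distrib_left sum_subtractf right_diff_distrib)
      also have "\<dots> = 0" using csum indsum by simp
      finally show ?thesis .
    qed
  qed
  have abel: "(\<Sum>i<Suc k. a i * d i) \<le> a k * D (Suc k)" if "k < n" for k
    using that
  proof (induction k)
    case 0 then show ?case by (simp add: D_def)
  next
    case (Suc k)
    then have IH: "(\<Sum>i<Suc k. a i * d i) \<le> a k * D (Suc k)" by simp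
    have "a (Suc k) \<le> a k" using adec Suc.prems by simp
    moreover have "D (Suc k) \<le> 0" using Dle Suc.prems by simp
    ultimately have "a k * D (Suc k) \<le> a (Suc k) * D (Suc k)" by (simp add: mult_right_mono_neg)
    then have "(\<Sum>i<Suc (Suc k). a i * d i) \<le> a (Suc k) * D (Suc k) + a (Suc k) * d (Suc k)"
      using IH by simp
    also have "\<dots> = a (Suc k) * D (Suc (Suc k))" by (simp add: D_def algebra_simps)
    finally show ?case .
  qed
  have "(\<Sum>i<n. a i * d i) \<le> 0"
  proof (cases n)
    case 0 then show ?thesis by simp
  next
    case (Suc k)
    then have "(\<Sum>i<n. a i * d i) \<le> a k * D n" using abel[of k] by simp
    moreover have "D n = 0"
    proof -
      have "c = 1" if "j < n" "c = (\<Sum>i<n. S i j)" for j c using col that by simp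
      have "D n = (\<Sum>i<n. \<Sum>j<n. b j * S i j) - (\<Sum>i<n. b i)"
        unfolding D_def d_def by (simp only: sum_subtractf)
      also have "(\<Sum>i<n. \<Sum>j<n. b j * S i j) = (\<Sum>j<n. \<Sum>i<n. b j * S i j)"
        by (rule sum.swap)
      also have "\<dots> = (\<Sum>j<n. b j * (\<Sum>i<n. S i j))" by (simp only: sum_distrib_left)
      also have "(\<Sum>j<n. b j * (\<Sum>i<n. S i j)) = (\<Sum>j<n. b j)" using col by (intro sum.cong) auto
      finally show ?thesis by simp
    qed
    ultimately show ?thesis by simp
  qed
  with diff show ?thesis by simp
qed



lemma mv_nth_inner: "(M *v x) $ i = M $ i \<bullet> x"
  by (simp add: matrix_vector_mult_def inner_vec_def mult.commute)

lemma self_inner_vec: "(x::real^'n) \<bullet> x = (\<Sum>i\<in>UNIV. (x $ i)^2)"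
  by (simp add: inner_vec_def power2_eq_square)

lemma fro_basis:
  fixes M :: "real^'n^'n" and w :: "nat \<Rightarrow> real^'n"
  assumes "onb w"
  shows "(\<Sum>i\<in>UNIV. \<Sum>j\<in>UNIV. (M$i$j)^2) = (\<Sum>k<CARD('n). (M *v w k) \<bullet> (M *v w k))"
proof -
  have "(\<Sum>i\<in>UNIV. \<Sum>j\<in>UNIV. (M$i$j)^2) = (\<Sum>i\<in>UNIV. M$i \<bullet> M$i)"
    by (simp add: self_inner_vec)
  also have "\<dots> = (\<Sum>i\<in>UNIV. \<Sum>k<CARD('n). (M$i \<bullet> w k)^2)"
    using norm2_onb[OF assms] by simp
  also have "\<dots> = (\<Sum>k<CARD('n). \<Sum>i\<in>UNIV. (M$i \<bullet> w k)^2)" by (rule sum.swap)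
  also have "\<dots> = (\<Sum>k<CARD('n). (M *v w k) \<bullet> (M *v w k))"
    by (simp add: self_inner_vec mv_nth_inner)
  finally show ?thesis .
qed

lemma orth_inner:
  fixes P :: "real^'n^'n"
  assumes "orthogonal_matrix P"
  shows "(P *v x) \<bullet> (P *v y) = x \<bullet> y"
proof -
  have "P *v x = x v* transpose P" by (metis transpose_matrix_vector transpose_transpose)
  then have "(P *v x) \<bullet> (P *v y) = (x v* transpose P) \<bullet> (P *v y)" by simp
  also have "\<dots> = x \<bullet> (transpose P *v (P *v y))" by (rule dot_lmul_matrix)
  also have "transpose P *v (P *v y) = (transpose P ** P) *v y" by (rule matrix_vector_mul_assoc)
  also have "\<dots> = y" using assms by (simp add: orthogonal_matrix_def)
  finally show ?thesis .
qed

lemma onb_orth: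
  assumes "onb w" "orthogonal_matrix P"
  shows "onb (\<lambda>k. P *v w k)"
  using assms unfolding onb_def by (simp add: orth_inner)

lemma fro_lower:
  fixes A B P :: "real^'n^'n"
  assumes symA: "symmetric_mat A" and symB: "symmetric_mat B"
    and u: "onb u" and eA: "\<forall>i<CARD('n). A *v u i = \<alpha> i *\<^sub>R u i"
    and dA: "\<forall>i j. i \<le> j \<longrightarrow> j < CARD('n) \<longrightarrow> \<alpha> j \<le> \<alpha> i"
    and w: "onb w" and eB: "\<forall>i<CARD('n). B *v w i = \<beta> i *\<^sub>R w i"
    and dB: "\<forall>i j. i \<le> j \<longrightarrow> j < CARD('n) \<longrightarrow> \<beta> j \<le> \<beta> i"
    and P: "orthogonal_matrix P"
  shows "(\<Sum>i<CARD('n). (\<alpha> i - \<beta> i)^2) \<le> (\<Sum>r\<in>UNIV. \<Sum>c\<in>UNIV. ((A ** P - P ** B)$r$c)^2)"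
proof -
  let ?m = "CARD('n)"
  define y where "y k = P *v w k" for k
  have y: "onb y" unfolding y_def by (rule onb_orth[OF w P])
  have yy: "y k \<bullet> y k = 1" if "k < ?m" for k using y that by (simp add: onb_def)
  have uu: "u k \<bullet> u k = 1" if "k < ?m" for k using u that by (simp add: onb_def)
  define M where "M = A ** P - P ** B"
  define S where "S j k = (u j \<bullet> y k)^2" for j k
  have Mw: "M *v w k = A *v y k - \<beta> k *\<^sub>R y k" if "k < ?m" for k
    using eB that
    by (simp add: M_def y_def matrix_vector_mult_diff_rdistrib matrix_vector_mul_assoc[symmetric]
        matrix_vector_mult_scaleR)
  have Auj: "(A *v x) \<bullet> u j = \<alpha> j * (x \<bullet> u j)" if "j < ?m" for j x
    using sym_inner[OF symA, of x "u j"] eA that by simp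
  have AyAy: "(A *v y k) \<bullet> (A *v y k) = (\<Sum>j<?m. \<alpha> j ^ 2 * S j k)" for k
    using norm2_onb[OF u, of "A *v y k"] Auj
    by (simp add: S_def power_mult_distrib inner_commute)
  have yAy: "y k \<bullet> (A *v y k) = (\<Sum>j<?m. \<alpha> j * S j k)" for k
    using rayleigh_onb[OF u symA eA, of "y k"] by (simp add: S_def inner_commute)
  have trm: "(M *v w k) \<bullet> (M *v w k) =
      (\<Sum>j<?m. \<alpha> j ^ 2 * S j k) - 2 * \<beta> k * (\<Sum>j<?m. \<alpha> j * S j k) + \<beta> k ^ 2"
    if "k < ?m" for k
  proof -
    have "(M *v w k) \<bullet> (M *v w k) = (A *v y k) \<bullet> (A *v y k) - 2 * \<beta> k * (y k \<bullet> (A *v y k))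
        + \<beta> k ^ 2 * (y k \<bullet> y k)"
      unfolding Mw[OF that]
      by (simp add: inner_diff_left inner_diff_right power2_eq_square inner_commute algebra_simps)
    then show ?thesis using AyAy yAy yy[OF that] by simp
  qed
  have rows: "(\<Sum>k<?m. S j k) = 1" if "j < ?m" for j
    using norm2_onb[OF y, of "u j"] uu[OF that] by (simp add: S_def)
  have cols: "(\<Sum>j<?m. S j k) = 1" if "k < ?m" for k
    using norm2_onb[OF u, of "y k"] yy[OF that] by (simp add: S_def inner_commute)
  have ds: "(\<Sum>j<?m. \<Sum>k<?m. \<alpha> j * \<beta> k * S j k) \<le> (\<Sum>i<?m. \<alpha> i * \<beta> i)"
    by (rule ds_ineq) (use dA dB rows cols in \<open>auto simp: S_def\<close>)
  have "(\<Sum>r\<in>UNIV. \<Sum>c\<in>UNIV. (M$r$c)^2) = (\<Sum>k<?m. (M *v w k) \<bullet> (M *v w k))"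
    by (rule fro_basis[OF w])
  also have "\<dots> = (\<Sum>k<?m. (\<Sum>j<?m. \<alpha> j ^ 2 * S j k) - 2 * \<beta> k * (\<Sum>j<?m. \<alpha> j * S j k) + \<beta> k ^ 2)"
    using trm by simp
  also have "\<dots> = (\<Sum>k<?m. \<Sum>j<?m. \<alpha> j ^ 2 * S j k) - 2 * (\<Sum>k<?m. \<Sum>j<?m. \<alpha> j * \<beta> k * S j k)
       + (\<Sum>k<?m. \<beta> k ^ 2)"
    by (simp add: sum.distrib sum_subtractf sum_distrib_left mult.assoc mult.left_commute)
  also have "(\<Sum>k<?m. \<Sum>j<?m. \<alpha> j ^ 2 * S j k) = (\<Sum>j<?m. \<Sum>k<?m. \<alpha> j ^ 2 * S j k)"
    by (rule sum.swap)
  also have "\<dots> = (\<Sum>j<?m. \<alpha> j ^ 2)"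
    using rows by (simp add: sum_distrib_left[symmetric])
  also have "(\<Sum>k<?m. \<Sum>j<?m. \<alpha> j * \<beta> k * S j k) = (\<Sum>j<?m. \<Sum>k<?m. \<alpha> j * \<beta> k * S j k)"
    by (rule sum.swap)
  finally have eq: "(\<Sum>r\<in>UNIV. \<Sum>c\<in>UNIV. (M$r$c)^2) =
     (\<Sum>j<?m. \<alpha> j ^ 2) - 2 * (\<Sum>j<?m. \<Sum>k<?m. \<alpha> j * \<beta> k * S j k) + (\<Sum>k<?m. \<beta> k ^ 2)" .
  have "(\<Sum>i<?m. (\<alpha> i - \<beta> i)^2) = (\<Sum>j<?m. \<alpha> j ^ 2) - 2 * (\<Sum>i<?m. \<alpha> i * \<beta> i) + (\<Sum>k<?m. \<beta> k ^ 2)"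
    by (simp add: power2_diff sum.distrib sum_subtractf sum_distrib_left mult.assoc)
  also have "\<dots> \<le> (\<Sum>r\<in>UNIV. \<Sum>c\<in>UNIV. (M$r$c)^2)" unfolding eq using ds by simp
  finally show ?thesis by (simp add: M_def)
qed



lemma onb_indep:
  fixes u :: "nat \<Rightarrow> real^'n"
  assumes u: "onb u" and I: "I \<subseteq> {..<CARD('n)}"
  shows "independent (u ` I)" "card (u ` I) = card I"
proof -
  have ortho: "\<forall>i<CARD('n). \<forall>j<CARD('n). u i \<bullet> u j = (if i = j then 1 else 0)"
    using u by (simp add: onb_def)
  have inj: "inj_on u I"
  proof (rule inj_onI)
    fix i j assume "i \<in> I" "j \<in> I" "u i = u j"
    then show "i = j" using ortho I by (metis lessThan_iff subsetD zero_neq_one)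
  qed
  have "pairwise orthogonal (u ` I)"
    unfolding pairwise_def orthogonal_def using ortho I by (auto, metis lessThan_iff subsetD)
  moreover have "0 \<notin> u ` I" using ortho I by (auto, metis inner_zero_left lessThan_iff subsetD zero_neq_one)
  ultimately show "independent (u ` I)" by (rule pairwise_orthogonal_independent)
  show "card (u ` I) = card I" using inj by (simp add: card_image)
qed

lemma onb_intersect:
  fixes u y :: "nat \<Rightarrow> real^'n"
  assumes u: "onb u" and y: "onb y" and I: "I \<subseteq> {..<CARD('n)}" and J: "J \<subseteq> {..<CARD('n)}"
    and card: "card I + card J > CARD('n)"
  shows "\<exists>z. z \<noteq> 0 \<and> z \<in> span (u ` I) \<and> z \<in> span (y ` J)"
proof (rule ccontr)
  assume "\<not> ?thesis"
  then have sub: "span (u ` I) \<inter> span (y ` J) \<subseteq> span {}" by auto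
  have "dim (span (u ` I) \<inter> span (y ` J)) \<le> card ({} :: (real^'n) set)"
    by (rule dim_le_card[OF sub]) simp
  then have d0: "dim (span (u ` I) \<inter> span (y ` J)) = 0" by simp
  have dI: "dim (span (u ` I)) = card I"
    using onb_indep[OF u I] by (metis dim_span_eq_card_independent)
  have dJ: "dim (span (y ` J)) = card J"
    using onb_indep[OF y J] by (metis dim_span_eq_card_independent)
  have "dim {a + b |a b. a \<in> span (u ` I) \<and> b \<in> span (y ` J)} + dim (span (u ` I) \<inter> span (y ` J))
        = dim (span (u ` I)) + dim (span (y ` J))"
    by (rule dim_sums_Int) auto
  moreover have "dim {a + b |a b. a \<in> span (u ` I) \<and> b \<in> span (y ` J)} \<le> CARD('n)"
    by (rule dim_subset_UNIV_cart)
  ultimately show False using d0 dI dJ card by simp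
qed

lemma onb_span_perp:
  fixes u :: "nat \<Rightarrow> real^'n"
  assumes u: "onb u" and z: "z \<in> span (u ` I)" and I: "I \<subseteq> {..<CARD('n)}"
    and j: "j < CARD('n)" "j \<notin> I"
  shows "z \<bullet> u j = 0"
proof -
  have "orthogonal (u j) z"
    using z
  proof (rule orthogonal_to_span)
    fix x assume "x \<in> u ` I"
    then obtain i where "i \<in> I" "x = u i" by auto
    then show "orthogonal (u j) x" using u I j unfolding onb_def orthogonal_def by auto
  qed
  then show ?thesis by (simp add: orthogonal_def inner_commute)
qed

lemma op_lower:
  fixes A B P :: "real^'n^'n"
  assumes symA: "symmetric_mat A" and symB: "symmetric_mat B"
    and u: "onb u" and eA: "\<forall>i<CARD('n). A *v u i = \<alpha> i *\<^sub>R u i"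
    and dA: "\<forall>i j. i \<le> j \<longrightarrow> j < CARD('n) \<longrightarrow> \<alpha> j \<le> \<alpha> i"
    and w: "onb w" and eB: "\<forall>i<CARD('n). B *v w i = \<beta> i *\<^sub>R w i"
    and dB: "\<forall>i j. i \<le> j \<longrightarrow> j < CARD('n) \<longrightarrow> \<beta> j \<le> \<beta> i"
    and P: "orthogonal_matrix P" and k: "k < CARD('n)"
  shows "\<bar>\<alpha> k - \<beta> k\<bar> \<le> onorm (\<lambda>x. (A ** P - P ** B) *v x)"
proof -
  let ?m = "CARD('n)"
  define M where "M = A ** P - P ** B"
  define N where "N = onorm (\<lambda>x. M *v x)"
  define y where "y l = P *v w l" for l
  have y: "onb y" unfolding y_def by (rule onb_orth[OF w P])
  have bl: "bounded_linear (\<lambda>x. M *v x)" by (rule matrix_vector_mul_bounded_linear)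
  have key: "z \<bullet> (M *v x) = z \<bullet> (A *v z) - x \<bullet> (B *v x)
         \<and> \<bar>z \<bullet> (M *v x)\<bar> \<le> N * (z \<bullet> z) \<and> x \<bullet> x = z \<bullet> z
         \<and> (\<forall>l. x \<bullet> w l = z \<bullet> y l)" if xz: "x = transpose P *v z" for x z
  proof -
    have "P *v x = (P ** transpose P) *v z" unfolding xz by (rule matrix_vector_mul_assoc)
    then have Px: "P *v x = z" using P by (simp add: orthogonal_matrix_def)
    have "M *v x = A *v z - P *v (B *v x)"
      by (simp add: M_def matrix_vector_mult_diff_rdistrib matrix_vector_mul_assoc[symmetric] Px)
    then have e1: "z \<bullet> (M *v x) = z \<bullet> (A *v z) - x \<bullet> (B *v x)"
      using orth_inner[OF P, of x "B *v x"] Px by (simp add: inner_diff_right)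
    have e2: "x \<bullet> x = z \<bullet> z" using orth_inner[OF P, of x x] Px by simp
    have nx: "norm x = norm z" using e2 by (simp add: norm_eq_sqrt_inner)
    have "\<bar>z \<bullet> (M *v x)\<bar> \<le> norm z * norm (M *v x)" by (rule Cauchy_Schwarz_ineq2)
    also have "\<dots> \<le> norm z * (N * norm x)"
      using onorm[OF bl, of x] by (simp add: N_def mult_left_mono)
    also have "\<dots> = N * (z \<bullet> z)" using nx by (simp add: dot_square_norm power2_eq_square)
    finally have e3: "\<bar>z \<bullet> (M *v x)\<bar> \<le> N * (z \<bullet> z)" .
    have e4: "\<forall>l. x \<bullet> w l = z \<bullet> y l"
    proof
      fix l show "x \<bullet> w l = z \<bullet> y l" using orth_inner[OF P, of x "w l"] Px by (simp add: y_def)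
    qed
    show ?thesis using e1 e2 e3 e4 by blast
  qed
  have ray: "x \<bullet> (A *v x) = (\<Sum>j<?m. \<alpha> j * (x \<bullet> u j)^2)" for x by (rule rayleigh_onb[OF u symA eA])
  have rayB: "x \<bullet> (B *v x) = (\<Sum>j<?m. \<beta> j * (x \<bullet> w j)^2)" for x by (rule rayleigh_onb[OF w symB eB])
  have nu: "x \<bullet> x = (\<Sum>j<?m. (x \<bullet> u j)^2)" for x by (rule norm2_onb[OF u])
  have nw: "x \<bullet> x = (\<Sum>j<?m. (x \<bullet> w j)^2)" for x by (rule norm2_onb[OF w])
  have subK: "{k..<?m} \<subseteq> {..<?m}" by (rule subsetI) simp
  have c1: "\<alpha> k - \<beta> k \<le> N"
  proof -
    have cd: "card {..<Suc k} + card {k..<?m} > ?m" using k by simp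
    obtain z where z0: "z \<noteq> 0" and zu: "z \<in> span (u ` {..<Suc k})" and zy: "z \<in> span (y ` {k..<?m})"
      using onb_intersect[OF u y _ _ cd] k by (meson Suc_leI atLeastLessThan_iff lessThan_iff lessThan_subset_iff subsetI)
    define x where "x = transpose P *v z"
    note kk = key[OF x_def]
    have zuj: "z \<bullet> u j = 0" if "j < ?m" "\<not> j \<le> k" for j
      using onb_span_perp[OF u zu _ that(1)] that k by auto
    have xwl: "x \<bullet> w l = 0" if "l < k" for l
      using onb_span_perp[OF y zy subK, of l] that k kk by auto
    have "\<alpha> k * (z \<bullet> z) \<le> z \<bullet> (A *v z)"
      unfolding ray nu sum_distrib_left
    proof (rule sum_mono)
      fix j assume j: "j \<in> {..<?m}"
      show "\<alpha> k * (z \<bullet> u j)\<^sup>2 \<le> \<alpha> j * (z \<bullet> u j)\<^sup>2"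
      proof (cases "j \<le> k")
        case True then have "\<alpha> k \<le> \<alpha> j" using dA k by simp
        then show ?thesis by (simp add: mult_right_mono)
      next
        case False then show ?thesis using zuj[of j] j by simp
      qed
    qed
    moreover have "x \<bullet> (B *v x) \<le> \<beta> k * (x \<bullet> x)"
      unfolding rayB nw[of x] sum_distrib_left
    proof (rule sum_mono)
      fix j assume j: "j \<in> {..<?m}"
      show "\<beta> j * (x \<bullet> w j)\<^sup>2 \<le> \<beta> k * (x \<bullet> w j)\<^sup>2"
      proof (cases "k \<le> j")
        case True then have "\<beta> j \<le> \<beta> k" using dB j by simp
        then show ?thesis by (simp add: mult_right_mono)
      next
        case False then show ?thesis using xwl[of j] j by simp
      qed
    qed
    ultimately have "(\<alpha> k - \<beta> k) * (z \<bullet> z) \<le> N * (z \<bullet> z)"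
      using kk unfolding left_diff_distrib by (auto simp: abs_le_iff)
    moreover have "z \<bullet> z > 0" using z0 by simp
    ultimately show ?thesis by simp
  qed
  have c2: "\<beta> k - \<alpha> k \<le> N"
  proof -
    have cd: "card {k..<?m} + card {..<Suc k} > ?m" using k by simp
    obtain z where z0: "z \<noteq> 0" and zu: "z \<in> span (u ` {k..<?m})" and zy: "z \<in> span (y ` {..<Suc k})"
      using onb_intersect[OF u y _ _ cd] k by (meson Suc_leI atLeastLessThan_iff lessThan_iff lessThan_subset_iff subsetI)
    define x where "x = transpose P *v z"
    note kk = key[OF x_def]
    have zuj: "z \<bullet> u j = 0" if "j < k" for j
      using onb_span_perp[OF u zu subK, of j] that k by auto
    have xwl: "x \<bullet> w l = 0" if "l < ?m" "\<not> l \<le> k" for l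
      using onb_span_perp[OF y zy _ that(1)] that k kk by auto
    have "z \<bullet> (A *v z) \<le> \<alpha> k * (z \<bullet> z)"
      unfolding ray nu sum_distrib_left
    proof (rule sum_mono)
      fix j assume j: "j \<in> {..<?m}"
      show "\<alpha> j * (z \<bullet> u j)\<^sup>2 \<le> \<alpha> k * (z \<bullet> u j)\<^sup>2"
      proof (cases "k \<le> j")
        case True then have "\<alpha> j \<le> \<alpha> k" using dA j by simp
        then show ?thesis by (simp add: mult_right_mono)
      next
        case False then show ?thesis using zuj[of j] j by simp
      qed
    qed
    moreover have "\<beta> k * (x \<bullet> x) \<le> x \<bullet> (B *v x)"
      unfolding rayB nw[of x] sum_distrib_left
    proof (rule sum_mono)
      fix j assume j: "j \<in> {..<?m}"
      show "\<beta> k * (x \<bullet> w j)\<^sup>2 \<le> \<beta> j * (x \<bullet> w j)\<^sup>2"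
      proof (cases "j \<le> k")
        case True then have "\<beta> k \<le> \<beta> j" using dB k by simp
        then show ?thesis by (simp add: mult_right_mono)
      next
        case False then show ?thesis using xwl[of j] j by simp
      qed
    qed
    ultimately have "(\<beta> k - \<alpha> k) * (z \<bullet> z) \<le> N * (z \<bullet> z)"
      using kk unfolding left_diff_distrib by (auto simp: abs_le_iff)
    moreover have "z \<bullet> z > 0" using z0 by simp
    ultimately show ?thesis by simp
  qed
  show ?thesis using c1 c2 by (simp add: N_def M_def)
qed



lemma dmat_diff: "dmat h a - dmat h b = dmat h (\<lambda>k. a k - b k)"
  by (simp add: dmat_def vec_eq_iff)

lemma dmat_sym: "symmetric_mat (dmat h d)"
  by (simp add: symmetric_mat_def dmat_def vec_eq_iff transpose_def)

lemma PD_entry: "(P ** dmat h d) $ r $ c = P $ r $ c * d (h c)"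
  by (simp add: matrix_matrix_mult_def dmat_def if_distrib if_distribR sum.delta' cong: if_cong)

lemma fro_upper:
  fixes u :: "nat \<Rightarrow> real^'n"
  assumes u: "onb u" and bij: "bij_betw h (UNIV::'n set) {..<CARD('n)}"
  shows "(\<Sum>r\<in>UNIV. \<Sum>c\<in>UNIV. ((evmat h u ** dmat h d) $ r $ c)^2) = (\<Sum>k<CARD('n). (d k)^2)"
proof -
  have hlt: "h c < CARD('n)" for c using bij by (auto dest: bij_betwE)
  have "(\<Sum>r\<in>UNIV. \<Sum>c\<in>UNIV. ((evmat h u ** dmat h d) $ r $ c)^2)
      = (\<Sum>c\<in>UNIV. \<Sum>r\<in>UNIV. (u (h c) $ r)^2 * (d (h c))^2)"
    by (subst sum.swap) (simp add: PD_entry evmat_def power_mult_distrib)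
  also have "\<dots> = (\<Sum>c\<in>UNIV. (d (h c))^2)"
  proof (rule sum.cong)
    fix c :: 'n
    have "(\<Sum>r\<in>UNIV. (u (h c) $ r)^2) = u (h c) \<bullet> u (h c)" by (simp add: self_inner_vec)
    also have "\<dots> = 1" using u hlt[of c] by (simp add: onb_def)
    finally show "(\<Sum>r\<in>UNIV. (u (h c) $ r)^2 * (d (h c))^2) = (d (h c))^2"
      by (simp add: sum_distrib_right[symmetric])
  qed simp
  also have "\<dots> = (\<Sum>k<CARD('n). (d k)^2)"
    by (rule sum.reindex_bij_betw[OF bij])
  finally show ?thesis .
qed

lemma op_upper:
  fixes u :: "nat \<Rightarrow> real^'n"
  assumes u: "onb u" and bij: "bij_betw h (UNIV::'n set) {..<CARD('n)}"
    and bnd: "\<forall>k<CARD('n). \<bar>d k\<bar> \<le> D"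
  shows "onorm (\<lambda>x. (evmat h u ** dmat h d) *v x) \<le> D"
proof (rule onorm_le)
  fix x :: "real^'n"
  have hlt: "h c < CARD('n)" for c using bij by (auto dest: bij_betwE)
  have D0: "0 \<le> D" using bnd by (meson abs_ge_zero order_trans zero_less_card_finite)
  have P: "orthogonal_matrix (evmat h u)" by (rule evmat_orth[OF u bij])
  have "(evmat h u ** dmat h d) *v x = evmat h u *v (dmat h d *v x)"
    by (simp add: matrix_vector_mul_assoc)
  then have "norm ((evmat h u ** dmat h d) *v x) = norm (dmat h d *v x)"
    using orth_inner[OF P, of "dmat h d *v x" "dmat h d *v x"] by (simp add: norm_eq_sqrt_inner)
  also have "\<dots> \<le> D * norm x"
  proof (rule power2_le_imp_le)
    have dx: "(dmat h d *v x) $ i = d (h i) * x $ i" for i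
      by (simp add: matrix_vector_mult_def dmat_def if_distrib if_distribR sum.delta' cong: if_cong)
    have "(norm (dmat h d *v x))^2 = (\<Sum>i\<in>UNIV. (d (h i))^2 * (x $ i)^2)"
      by (simp add: power2_norm_eq_inner self_inner_vec dx power_mult_distrib)
    also have "\<dots> \<le> (\<Sum>i\<in>UNIV. D^2 * (x $ i)^2)"
    proof (rule sum_mono)
      fix i :: 'n
      have "\<bar>d (h i)\<bar> \<le> D" using bnd hlt by simp
      then have "(d (h i))^2 \<le> D^2" by (metis abs_ge_zero power2_abs power_mono)
      then show "(d (h i))^2 * (x $ i)^2 \<le> D^2 * (x $ i)^2" by (simp add: mult_right_mono)
    qed
    also have "\<dots> = (D * norm x)^2"
      by (simp add: power2_norm_eq_inner self_inner_vec sum_distrib_left power_mult_distrib)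
    finally show "(norm (dmat h d *v x))^2 \<le> (D * norm x)^2" .
    show "0 \<le> D * norm x" using D0 by simp
  qed
  finally show "norm ((evmat h u ** dmat h d) *v x) \<le> D * norm x" .
qed



lemma vdiff_len: "length L = CARD('n) \<Longrightarrow> length (vdiff (map \<alpha> [0..<CARD('n)]) L) = CARD('n)"
  by (simp add: vdiff_def)

lemma vdiff_nth: "length L = CARD('n) \<Longrightarrow> i < CARD('n) \<Longrightarrow>
    vdiff (map \<alpha> [0..<CARD('n)]) L ! i = \<alpha> i - L ! i"
  by (simp add: vdiff_def)

lemma vn_fro: "length L = CARD('n) \<Longrightarrow>
   vec_norm Frobenius (vdiff (map \<alpha> [0..<CARD('n)]) L) = sqrt (\<Sum>i<CARD('n). (\<alpha> i - L ! i)^2)"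
  unfolding vec_norm_def by (simp add: vdiff_len vdiff_nth)

lemma vn_op: "length L = CARD('n) \<Longrightarrow>
   vec_norm Operator2 (vdiff (map \<alpha> [0..<CARD('n)]) L) = Max {\<bar>\<alpha> i - L ! i\<bar> | i. i < CARD('n)}"
proof -
  assume l: "length L = CARD('n)"
  have "{\<bar>vdiff (map \<alpha> [0..<CARD('n)]) L ! i\<bar> | i. i < length (vdiff (map \<alpha> [0..<CARD('n)]) L)}
      = {\<bar>\<alpha> i - L ! i\<bar> | i. i < CARD('n)}"
    using l by (auto simp: vdiff_len vdiff_nth; metis l vdiff_nth)
  then show ?thesis unfolding vec_norm_def by simp
qed

lemma fin_set: "finite {f i | i. i < (m::nat)}"
  by simp

lemma Max_ge_set: "i < (m::nat) \<Longrightarrow> f i \<le> Max {f i | i. i < m}"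
  by (rule Max_ge) auto

lemma Max_le_set: "0 < (m::nat) \<Longrightarrow> (\<forall>i<m. f i \<le> c) \<Longrightarrow> Max {f i | i. i < m} \<le> c"
  by (rule Max.boundedI) auto

lemma mat_norm_nonneg: "0 \<le> mat_norm k M"
  by (cases k) (auto simp: mat_norm_def intro!: onorm_pos_le matrix_vector_mul_bounded_linear sum_nonneg)

lemma orth_ne: "{P :: real^'n^'n. orthogonal_matrix P} \<noteq> {}"
  using orthogonal_matrix_id by blast

lemma d_nonneg: "0 \<le> d_fun k A B"
  unfolding d_fun_def s_fun_def
  by (rule cINF_greatest[OF orth_ne]) (rule mat_norm_nonneg)

lemma lower_d:
  fixes A B :: "real^'n^'n"
  assumes symA: "symmetric_mat A" and symB: "symmetric_mat B"
  shows "vec_norm k (vdiff (eig_vec A) (eig_vec B)) \<le> d_fun k A B"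
proof -
  obtain u \<alpha> where u: "onb u" and eA: "\<forall>i<CARD('n). A *v u i = \<alpha> i *\<^sub>R u i"
    and dA: "\<forall>i j. i \<le> j \<longrightarrow> j < CARD('n) \<longrightarrow> \<alpha> j \<le> \<alpha> i"
    and evA: "eig_vec A = map \<alpha> [0..<CARD('n)]"
    using eig_spec[OF symA] by blast
  obtain w \<beta> where w: "onb w" and eB: "\<forall>i<CARD('n). B *v w i = \<beta> i *\<^sub>R w i"
    and dB: "\<forall>i j. i \<le> j \<longrightarrow> j < CARD('n) \<longrightarrow> \<beta> j \<le> \<beta> i"
    and evB: "eig_vec B = map \<beta> [0..<CARD('n)]"
    using eig_spec[OF symB] by blast
  have lenB: "length (map \<beta> [0..<CARD('n)]) = CARD('n)" by simp
  have nthB: "map \<beta> [0..<CARD('n)] ! i = \<beta> i" if "i < CARD('n)" for i using that by simp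
  show ?thesis
    unfolding d_fun_def
  proof (rule cINF_greatest[OF orth_ne])
    fix P :: "real^'n^'n" assume "P \<in> {P. orthogonal_matrix P}"
    then have P: "orthogonal_matrix P" by simp
    show "vec_norm k (vdiff (eig_vec A) (eig_vec B)) \<le> s_fun k A B P"
    proof (cases k)
      case Frobenius
      have "(\<Sum>i<CARD('n). (\<alpha> i - map \<beta> [0..<CARD('n)] ! i)^2) = (\<Sum>i<CARD('n). (\<alpha> i - \<beta> i)^2)"
        by (intro sum.cong) auto
      also have "\<dots> \<le> (\<Sum>r\<in>UNIV. \<Sum>c\<in>UNIV. ((A ** P - P ** B)$r$c)^2)"
        by (rule fro_lower[OF symA symB u eA dA w eB dB P])
      finally show ?thesis
        unfolding evA evB Frobenius vn_fro[OF lenB] s_fun_def mat_norm_def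
        by (simp add: real_sqrt_le_mono)
    next
      case Operator2
      have "Max {\<bar>\<alpha> i - map \<beta> [0..<CARD('n)] ! i\<bar> | i. i < CARD('n)} \<le> onorm (\<lambda>x. (A ** P - P ** B) *v x)"
        by (rule Max_le_set) (use op_lower[OF symA symB u eA dA w eB dB P] in auto)
      then show ?thesis
        unfolding evA evB Operator2 vn_op[OF lenB] s_fun_def mat_norm_def by simp
    qed
  qed
qed

lemma upper_d:
  fixes A :: "real^'n^'n"
  assumes symA: "symmetric_mat A" and L: "length L = CARD('n)"
    and bij: "bij_betw h (UNIV::'n set) {..<CARD('n)}"
  shows "d_fun k A (dmat h (\<lambda>j. L ! j)) \<le> vec_norm k (vdiff (eig_vec A) L)"
proof -
  obtain u \<alpha> where u: "onb u" and eA: "\<forall>i<CARD('n). A *v u i = \<alpha> i *\<^sub>R u i"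
    and evA: "eig_vec A = map \<alpha> [0..<CARD('n)]"
    using eig_spec[OF symA] by blast
  define P where "P = evmat h u"
  have P: "orthogonal_matrix P" unfolding P_def by (rule evmat_orth[OF u bij])
  have AP: "A ** P = P ** dmat h \<alpha>" unfolding P_def by (rule evmat_eig[OF eA bij])
  have M: "A ** P - P ** dmat h (\<lambda>j. L ! j) = evmat h u ** dmat h (\<lambda>j. \<alpha> j - L ! j)"
  proof -
    have "A ** P - P ** dmat h (\<lambda>j. L ! j) = P ** dmat h \<alpha> - P ** dmat h (\<lambda>j. L ! j)"
      using AP by simp
    also have "\<dots> = P ** (dmat h \<alpha> - dmat h (\<lambda>j. L ! j))" by (rule matrix_sub_ldistrib'[symmetric])
    also have "\<dots> = P ** dmat h (\<lambda>j. \<alpha> j - L ! j)" by (simp add: dmat_diff)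
    finally show ?thesis unfolding P_def .
  qed
  have "d_fun k A (dmat h (\<lambda>j. L ! j)) \<le> s_fun k A (dmat h (\<lambda>j. L ! j)) P"
    unfolding d_fun_def
    by (rule cINF_lower) (use P in \<open>auto intro!: bdd_belowI[of _ 0] simp: s_fun_def mat_norm_nonneg\<close>)
  also have "\<dots> \<le> vec_norm k (vdiff (eig_vec A) L)"
  proof (cases k)
    case Frobenius
    show ?thesis
      by (simp add: s_fun_def M Frobenius mat_norm_def evA vn_fro[OF L] fro_upper[OF u bij])
  next
    case Operator2
    have "onorm (\<lambda>x. (evmat h u ** dmat h (\<lambda>j. \<alpha> j - L ! j)) *v x)
        \<le> Max {\<bar>\<alpha> i - L ! i\<bar> | i. i < CARD('n)}"
      by (rule op_upper[OF u bij]) (auto intro: Max_ge_set)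
    then show ?thesis
      by (simp add: s_fun_def M Operator2 mat_norm_def evA vn_op[OF L])
  qed
  finally show ?thesis .
qed

lemma vn_nonneg: "0 < length x \<Longrightarrow> 0 \<le> vec_norm k x"
proof (cases k)
  case Operator2
  assume "0 < length x"
  then have "\<bar>x ! 0\<bar> \<le> Max {\<bar>x ! i\<bar> | i. i < length x}" by (rule Max_ge_set)
  moreover have "0 \<le> \<bar>x ! 0\<bar>" by simp
  ultimately have "0 \<le> Max {\<bar>x ! i\<bar> | i. i < length x}" by linarith
  then show ?thesis using Operator2 unfolding vec_norm_def by simp
qed (simp add: vec_norm_def sum_nonneg)

theorem theorem6:
  fixes k :: norm_kind and n :: nat and A :: "nat \<Rightarrow> real^'m^'m"
  assumes "\<forall>i<n. symmetric_mat (A i)"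
  shows "fermat_dist k n A =
    (INF L\<in>{L :: real list. length L = CARD('m)}. \<Sum>i<n. vec_norm k (vdiff (eig_vec (A i)) L))"
proof -
  let ?m = "CARD('m)"
  let ?R = "\<lambda>L. \<Sum>i<n. vec_norm k (vdiff (eig_vec (A i)) L)"
  let ?F = "\<lambda>B. \<Sum>i<n. d_fun k (A i) B"
  have symA: "symmetric_mat (A i)" if "i < n" for i using assms that by simp
  have lenA: "length (eig_vec (A i)) = ?m" if "i < n" for i
    using eig_spec[OF symA[OF that]] by auto
  have Lne: "{L :: real list. length L = ?m} \<noteq> {}" by (auto intro: exI[of _ "replicate ?m 0"])
  have Bne: "{B :: real^'m^'m. symmetric_mat B} \<noteq> {}"
    using dmat_sym by blast
  have Rnn: "0 \<le> ?R L" if "length L = ?m" for L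
  proof (rule sum_nonneg)
    fix i assume "i \<in> {..<n}"
    then have "length (vdiff (eig_vec (A i)) L) = ?m" using lenA that by (simp add: vdiff_def)
    then show "0 \<le> vec_norm k (vdiff (eig_vec (A i)) L)" by (intro vn_nonneg) simp
  qed
  have Fnn: "0 \<le> ?F B" for B by (rule sum_nonneg) (rule d_nonneg)
  obtain h where bij: "bij_betw h (UNIV::'m set) {..<?m}"
    using to_nat_on_finite[of "UNIV::'m set"] by auto
  have le1: "fermat_dist k n A \<le> (INF L\<in>{L. length L = ?m}. ?R L)"
  proof (rule cINF_greatest[OF Lne])
    fix L :: "real list" assume "L \<in> {L. length L = ?m}"
    then have L: "length L = ?m" by simp
    have "fermat_dist k n A \<le> ?F (dmat h (\<lambda>j. L ! j))"
      unfolding fermat_dist_def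
      by (rule cINF_lower) (auto intro!: bdd_belowI[of _ 0] Fnn dmat_sym)
    also have "\<dots> \<le> ?R L"
      by (rule sum_mono) (rule upper_d[OF _ L bij], rule symA, simp)
    finally show "fermat_dist k n A \<le> ?R L" .
  qed
  have le2: "(INF L\<in>{L. length L = ?m}. ?R L) \<le> fermat_dist k n A"
    unfolding fermat_dist_def
  proof (rule cINF_greatest[OF Bne])
    fix B :: "real^'m^'m" assume "B \<in> {B. symmetric_mat B}"
    then have symB: "symmetric_mat B" by simp
    have lenB: "length (eig_vec B) = ?m" using eig_spec[OF symB] by auto
    have "(INF L\<in>{L. length L = ?m}. ?R L) \<le> ?R (eig_vec B)"
      by (rule cINF_lower) (use lenB Rnn in \<open>auto intro!: bdd_belowI[of _ 0]\<close>)
    also have "\<dots> \<le> ?F B"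
      by (rule sum_mono) (rule lower_d[OF _ symB], rule symA, simp)
    finally show "(INF L\<in>{L. length L = ?m}. ?R L) \<le> ?F B" .
  qed
  from le1 le2 show ?thesis by simp
qed

end
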